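(* Let $X$ be a locally compact separable metric space which is not discrete, endowed with its Borel $\sigma$-algebra, let $V$ be a finite-dimensional real vector space and let $|\cdot|_V$ be a seminorm on $V$ which is not strictly convex. Then there exists a sequence $(\mu_n)_{n\in\mathbb{N}}$ of Borel vector measures from $X$ to $V$ converging widely to a Borel vector measure $\mu$ such that $|\mu_n|_V(X)\to|\mu|_V(X)$, but the sequence $(\mathcal{R}(\mu_n))_{n\in\mathbb{N}}$ is constant and different from $\mathcal{R}(\mu)$ (so in particular the ranges do not converge to $\mathcal{R}(\mu)$).
   Context: A seminorm $|\cdot|_V$ is strictly convex if for all linearly independent $v,w\in V$, $|v+w|_V<|v|_V+|w|_V$. A vector measure is a countably additive map $\mu:\Sigma\to V$. The total variation is $|\mu|_V(A)=\sup\{\sum_{i=1}^m|\mu(E_i)|_V : E_1,\dots,E_m\in\Sigma \text{ pairwise disjoint subsets of } A\}$. The range is $\mathcal{R}(\mu)=\overline{\mathrm{conv}}\{\mu(E):E\in\Sigma\}$. Wide convergence of $\mu_n$ to $\mu$ means $\int_X\varphi\,d\mu_n\to\int_X\varphi\,d\mu$ for every $\varphi\in C_c(X,\mathbb{R})$. *)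

theory Defs
  imports "HOL-Analysis.Analysis"
begin

definition seminorm :: "('v::real_vector \<Rightarrow> real) \<Rightarrow> bool" where
  "seminorm p \<longleftrightarrow> (\<forall>x y. p (x + y) \<le> p x + p y) \<and> (\<forall>c x. p (c *\<^sub>R x) = \<bar>c\<bar> * p x)"

definition strictly_convex_seminorm :: "('v::real_vector \<Rightarrow> real) \<Rightarrow> bool" where
  "strictly_convex_seminorm p \<longleftrightarrow>
     (\<forall>v w. v \<noteq> w \<and> independent {v, w} \<longrightarrow> p (v + w) < p v + p w)"

definition vector_measure :: "'a measure \<Rightarrow> ('a set \<Rightarrow> 'v::real_normed_vector) \<Rightarrow> bool" where
  "vector_measure M \<mu> \<longleftrightarrow>
     \<mu> {} = 0 \<and>
     (\<forall>A::nat \<Rightarrow> 'a set. range A \<subseteq> sets M \<and> disjoint_family A \<longrightarrow>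
        (\<lambda>n. \<mu> (A n)) sums \<mu> (\<Union>n. A n))"

definition total_variation ::
  "'a measure \<Rightarrow> ('v \<Rightarrow> real) \<Rightarrow> ('a set \<Rightarrow> 'v) \<Rightarrow> 'a set \<Rightarrow> ennreal" where
  "total_variation M p \<mu> A =
     (SUP F \<in> {F. finite F \<and> F \<subseteq> sets M \<and> (\<forall>E\<in>F. E \<subseteq> A) \<and> disjoint F}.
        ennreal (\<Sum>E\<in>F. p (\<mu> E)))"

definition vm_range :: "'a measure \<Rightarrow> ('a set \<Rightarrow> 'v::real_normed_vector) \<Rightarrow> 'v set" where
  "vm_range M \<mu> = closure (convex hull (\<mu> ` sets M))"

text \<open>Integral of a bounded real function against a vector measure, defined as the limit of
  the sums \<open>\<Sum> c_E \<mu>(E)\<close> over finite measurable partitions on whose cells \<open>\<phi>\<close> is uniformly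
  approximated by the constants \<open>c_E\<close> (i.e. integrals of uniformly approximating simple functions).\<close>
definition vm_integral :: "'a measure \<Rightarrow> ('a set \<Rightarrow> 'v::real_normed_vector) \<Rightarrow> ('a \<Rightarrow> real) \<Rightarrow> 'v" where
  "vm_integral M \<mu> \<phi> =
     (THE I. \<forall>e>0. \<exists>d>0. \<forall>P c. finite P \<and> P \<subseteq> sets M \<and> disjoint P \<and> \<Union>P = space M \<and>
        (\<forall>E\<in>P. \<forall>x\<in>E. \<bar>\<phi> x - c E\<bar> \<le> d) \<longrightarrow> norm ((\<Sum>E\<in>P. c E *\<^sub>R \<mu> E) - I) \<le> e)"

definition Cc :: "('a::topological_space \<Rightarrow> real) set" where
  "Cc = {\<phi>. continuous_on UNIV \<phi> \<and> compact (closure {x. \<phi> x \<noteq> 0})}"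

definition wide_conv ::
  "'a::topological_space measure \<Rightarrow> (nat \<Rightarrow> 'a set \<Rightarrow> 'v::real_normed_vector) \<Rightarrow> ('a set \<Rightarrow> 'v) \<Rightarrow> bool" where
  "wide_conv M \<mu>s \<mu> \<longleftrightarrow>
     (\<forall>\<phi>\<in>Cc. (\<lambda>n. vm_integral M (\<mu>s n) \<phi>) \<longlonglongrightarrow> vm_integral M \<mu> \<phi>)"

end

theory Submission
  imports Defs
begin

lemma seminorm_nonneg:
  assumes "seminorm p" shows "p x \<ge> 0" "p 0 = 0"
proof -
  have z: "p 0 = 0" using assms unfolding seminorm_def by (metis abs_zero mult_zero_left scaleR_zero_left)
  have "p 0 \<le> p x + p (-x)" using assms unfolding seminorm_def by (metis add.right_inverse)
  moreover have "p (-x) = p x" using assms unfolding seminorm_def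
    by (metis abs_minus_cancel abs_one mult_1 scaleR_minus1_left)
  ultimately show "p x \<ge> 0" using z by simp
  show "p 0 = 0" by (fact z)
qed

lemma sum_one_point:
  assumes "finite F" "disjoint F" "\<And>E. E \<in> F \<Longrightarrow> y \<notin> E \<Longrightarrow> g E = 0"
  shows "(sum g F = 0) \<or> (\<exists>E\<in>F. y \<in> E \<and> sum g F = g E)"
proof (cases "\<exists>E\<in>F. y \<in> E")
  case True
  then obtain E where E: "E \<in> F" "y \<in> E" by blast
  have "\<And>E'. E' \<in> F \<Longrightarrow> y \<in> E' \<Longrightarrow> E' = E"
    using assms(2) E unfolding pairwise_def disjnt_def by blast
  hence "sum g F = sum (\<lambda>E'. if E' = E then g E' else 0) F"
    using assms(3) by (intro sum.cong) auto
  also have "\<dots> = g E" using E assms(1) by simp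
  finally show ?thesis using E by blast
next
  case False
  then show ?thesis using assms(3) by simp
qed

lemma partition_exists:
  fixes \<phi> :: "'a::metric_space \<Rightarrow> real"
  assumes meas: "\<phi> \<in> borel_measurable borel" and B: "\<And>x. \<bar>\<phi> x\<bar> \<le> B" and d: "d > 0"
  shows "\<exists>P c. finite P \<and> P \<subseteq> sets borel \<and> disjoint P \<and> \<Union>P = space borel \<and>
           (\<forall>E\<in>P. \<forall>x\<in>E. \<bar>\<phi> x - c E\<bar> \<le> d)"
proof -
  define N where "N = ceiling (B/d)"
  define f where "f k = \<phi> -` {of_int k * d ..< (of_int k + 1) * d}" for k::int
  define P where "P = f ` {-N-1..N}"
  define c where "c E = \<phi> (SOME x. x \<in> E)" for E :: "'a set"
  have fin: "finite P" unfolding P_def by simp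
  have sets: "P \<subseteq> sets borel" unfolding P_def f_def
    using measurable_sets_borel[OF meas] by auto
  have mem: "x \<in> f k \<longleftrightarrow> of_int k * d \<le> \<phi> x \<and> \<phi> x < (of_int k + 1) * d" for x k
    unfolding f_def by auto
  have uniq: "k = k'" if "x \<in> f k" "x \<in> f k'" for x k k'
  proof -
    have "of_int k * d < (of_int k' + 1) * d" "of_int k' * d < (of_int k + 1) * d"
      using that mem by force+
    hence "of_int k < (of_int k' + 1::real)" "of_int k' < (of_int k + 1::real)"
      using d by (simp_all add: mult_less_cancel_right_pos)
    thus ?thesis by linarith
  qed
  have disj: "disjoint P" unfolding P_def pairwise_def disjnt_def
    using uniq by blast
  have cover: "\<Union>P = space borel"
  proof -
    { fix x
      define k where "k = floor (\<phi> x / d)"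
      have "of_int k \<le> \<phi> x / d" "\<phi> x / d < of_int k + 1" unfolding k_def by linarith+
      hence "of_int k * d \<le> \<phi> x" "\<phi> x < (of_int k + 1) * d" using d
        by (simp_all add: pos_le_divide_eq pos_divide_less_eq)
      hence "x \<in> f k" using mem by blast
      have h1: "\<phi> x / d \<le> B / d" using B[of x] d
        by (simp add: divide_right_mono)
      have "- B \<le> \<phi> x" using B[of x] by linarith
      hence h2: "- B / d \<le> \<phi> x / d" using d divide_right_mono[of "-B" "\<phi> x" d] by simp
      have hN: "B / d \<le> of_int N" unfolding N_def by (rule le_of_int_ceiling)
      have "real_of_int k \<le> of_int N" using h1 hN \<open>of_int k \<le> \<phi> x / d\<close> by linarith
      hence "k \<le> N" by simp
      have "real_of_int (-N-1) < of_int k" using h2 hN \<open>\<phi> x / d < of_int k + 1\<close> by simp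
      hence "-N-1 \<le> k" by simp
      hence "x \<in> \<Union>P" using \<open>k \<le> N\<close> \<open>x \<in> f k\<close> unfolding P_def by auto }
    thus ?thesis by auto
  qed
  have appr: "\<forall>E\<in>P. \<forall>x\<in>E. \<bar>\<phi> x - c E\<bar> \<le> d"
  proof (intro ballI)
    fix E x assume "E \<in> P" "x \<in> E"
    then obtain k where k: "E = f k" unfolding P_def by auto
    have "(SOME x. x \<in> E) \<in> E" using \<open>x \<in> E\<close> by (rule someI)
    thus "\<bar>\<phi> x - c E\<bar> \<le> d" using \<open>x \<in> E\<close> unfolding c_def k mem
      by (smt (verit, ccfv_SIG) distrib_right mult_cancel_right1)
  qed
  show ?thesis using fin sets disj cover appr by blast
qed

lemma sum_one_point2:
  assumes "finite F" "disjoint F" "\<And>E. E \<in> F \<Longrightarrow> y \<notin> E \<Longrightarrow> g E = 0" "y \<in> \<Union>F"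
  shows "\<exists>E\<in>F. y \<in> E \<and> sum g F = g E"
proof -
  obtain E where E: "E \<in> F" "y \<in> E" using assms(4) by blast
  have "\<And>E'. E' \<in> F \<Longrightarrow> y \<in> E' \<Longrightarrow> E' = E"
    using assms(2) E unfolding pairwise_def disjnt_def by blast
  hence "sum g F = sum (\<lambda>E'. if E' = E then g E' else 0) F"
    using assms(3) by (intro sum.cong) auto
  also have "\<dots> = g E" using E assms(1) by simp
  finally show ?thesis using E by blast
qed

lemma Cc_bounded:
  fixes \<phi> :: "'a::metric_space \<Rightarrow> real"
  assumes "\<phi> \<in> Cc"
  shows "\<exists>B. \<forall>x. \<bar>\<phi> x\<bar> \<le> B"
proof -
  define K where "K = closure {x. \<phi> x \<noteq> 0}"
  have cK: "compact K" and cont: "continuous_on UNIV \<phi>" using assms unfolding Cc_def K_def by auto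
  have "continuous_on K \<phi>" using cont by (rule continuous_on_subset) simp
  hence "compact (\<phi> ` K)" using cK by (rule compact_continuous_image)
  hence "bounded (\<phi> ` K)" by (rule compact_imp_bounded)
  then obtain B where B: "\<forall>y\<in>\<phi> ` K. norm y \<le> B" unfolding bounded_iff by blast
  have "\<bar>\<phi> x\<bar> \<le> max B 0" for x
  proof (cases "x \<in> K")
    case True
    hence "norm (\<phi> x) \<le> B" using B by blast
    thus ?thesis by simp
  next
    case False
    have "{x. \<phi> x \<noteq> 0} \<subseteq> K" unfolding K_def by (rule closure_subset)
    hence "\<phi> x = 0" using False by blast
    thus ?thesis by simp
  qed
  thus ?thesis by blast
qed

lemma vm_integral_two:
  fixes \<phi> :: "'a::metric_space \<Rightarrow> real" and a1 a2 :: "'v::real_normed_vector"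
  assumes "\<phi> \<in> Cc"
  shows "vm_integral borel (\<lambda>E. (if y1\<in>E then a1 else 0) + (if y2\<in>E then a2 else 0)) \<phi>
           = \<phi> y1 *\<^sub>R a1 + \<phi> y2 *\<^sub>R a2"
proof -
  define \<mu> where "\<mu> = (\<lambda>E. (if y1\<in>E then a1 else 0) + (if y2\<in>E then a2 else 0))"
  define I0 where "I0 = \<phi> y1 *\<^sub>R a1 + \<phi> y2 *\<^sub>R a2"
  define Q where "Q I \<longleftrightarrow> (\<forall>e>0. \<exists>d>0. \<forall>P c. finite P \<and> P \<subseteq> sets borel \<and> disjoint P \<and> \<Union>P = space borel \<and>
        (\<forall>E\<in>P. \<forall>x\<in>E. \<bar>\<phi> x - c E\<bar> \<le> d) \<longrightarrow> norm ((\<Sum>E\<in>P. c E *\<^sub>R \<mu> E) - I) \<le> e)" for I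
  obtain B where B: "\<And>x. \<bar>\<phi> x\<bar> \<le> B" using Cc_bounded[OF assms] by blast
  have meas: "\<phi> \<in> borel_measurable borel"
    using assms unfolding Cc_def by (auto intro: borel_measurable_continuous_onI)
  have Q0: "Q I0" unfolding Q_def
  proof (intro allI impI)
    fix e :: real assume e: "e > 0"
    define d where "d = e / (norm a1 + norm a2 + 1)"
    have npos: "norm a1 + norm a2 + 1 > 0" using norm_ge_zero[of a1] norm_ge_zero[of a2] by linarith
    have dpos: "d > 0" unfolding d_def using e by (simp add: add_nonneg_pos)
    show "\<exists>d>0. \<forall>P c. finite P \<and> P \<subseteq> sets borel \<and> disjoint P \<and> \<Union>P = space borel \<and>
        (\<forall>E\<in>P. \<forall>x\<in>E. \<bar>\<phi> x - c E\<bar> \<le> d) \<longrightarrow> norm ((\<Sum>E\<in>P. c E *\<^sub>R \<mu> E) - I0) \<le> e"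
    proof (intro exI[of _ d] conjI dpos allI impI)
      fix P c assume H: "finite P \<and> P \<subseteq> sets borel \<and> disjoint P \<and> \<Union>P = space borel \<and>
        (\<forall>E\<in>P. \<forall>x\<in>E. \<bar>\<phi> x - c E\<bar> \<le> d)"
      have split: "(\<Sum>E\<in>P. c E *\<^sub>R \<mu> E) = (\<Sum>E\<in>P. c E *\<^sub>R (if y1\<in>E then a1 else 0)) + (\<Sum>E\<in>P. c E *\<^sub>R (if y2\<in>E then a2 else 0))"
        unfolding \<mu>_def by (simp add: scaleR_add_right sum.distrib)
      have Hf: "finite P" and Hd: "disjoint P" and Hu: "\<Union>P = UNIV"
        and Ha: "\<forall>E\<in>P. \<forall>x\<in>E. \<bar>\<phi> x - c E\<bar> \<le> d" using H by auto
      obtain E1 where E1a: "E1 \<in> P" "y1 \<in> E1" and E1b: "(\<Sum>E\<in>P. c E *\<^sub>R (if y1\<in>E then a1 else 0)) = c E1 *\<^sub>R (if y1\<in>E1 then a1 else 0)"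
        using sum_one_point2[of P y1 "\<lambda>E. c E *\<^sub>R (if y1\<in>E then a1 else 0)", OF Hf Hd] Hu by auto
      have E1: "E1 \<in> P" "y1 \<in> E1" "(\<Sum>E\<in>P. c E *\<^sub>R (if y1\<in>E then a1 else 0)) = c E1 *\<^sub>R a1"
        using E1a E1b by auto
      obtain E2 where E2a: "E2 \<in> P" "y2 \<in> E2" and E2b: "(\<Sum>E\<in>P. c E *\<^sub>R (if y2\<in>E then a2 else 0)) = c E2 *\<^sub>R (if y2\<in>E2 then a2 else 0)"
        using sum_one_point2[of P y2 "\<lambda>E. c E *\<^sub>R (if y2\<in>E then a2 else 0)", OF Hf Hd] Hu by auto
      have E2: "E2 \<in> P" "y2 \<in> E2" "(\<Sum>E\<in>P. c E *\<^sub>R (if y2\<in>E then a2 else 0)) = c E2 *\<^sub>R a2"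
        using E2a E2b by auto
      have "\<bar>\<phi> y1 - c E1\<bar> \<le> d" using Ha E1(1,2) by blast
      hence c1: "\<bar>c E1 - \<phi> y1\<bar> \<le> d" by (simp add: abs_minus_commute)
      have "\<bar>\<phi> y2 - c E2\<bar> \<le> d" using Ha E2(1,2) by blast
      hence c2: "\<bar>c E2 - \<phi> y2\<bar> \<le> d" by (simp add: abs_minus_commute)
      have "(\<Sum>E\<in>P. c E *\<^sub>R \<mu> E) - I0 = (c E1 - \<phi> y1) *\<^sub>R a1 + (c E2 - \<phi> y2) *\<^sub>R a2"
        unfolding split E1(3) E2(3) I0_def by (simp add: algebra_simps)
      also have "norm \<dots> \<le> norm ((c E1 - \<phi> y1) *\<^sub>R a1) + norm ((c E2 - \<phi> y2) *\<^sub>R a2)"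
        by (rule norm_triangle_ineq)
      also have "\<dots> = \<bar>c E1 - \<phi> y1\<bar> * norm a1 + \<bar>c E2 - \<phi> y2\<bar> * norm a2"
        by simp
      also have "\<dots> \<le> d * norm a1 + d * norm a2"
        using c1 c2 by (intro add_mono mult_right_mono) auto
      also have "\<dots> \<le> d * (norm a1 + norm a2 + 1)" using dpos by (simp add: algebra_simps)
      also have "\<dots> = e" unfolding d_def using npos by simp
      finally show "norm ((\<Sum>E\<in>P. c E *\<^sub>R \<mu> E) - I0) \<le> e" .
    qed
  qed
  define Hy where "Hy d P c \<longleftrightarrow> finite P \<and> P \<subseteq> sets borel \<and> disjoint P \<and> \<Union>P = space borel \<and>
        (\<forall>E\<in>P. \<forall>x\<in>E. \<bar>\<phi> x - c E\<bar> \<le> d)" for d and P :: "'a set set" and c :: "'a set \<Rightarrow> real"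
  have Qeq: "Q I \<longleftrightarrow> (\<forall>e>0. \<exists>d>0. \<forall>P c. Hy d P c \<longrightarrow> norm ((\<Sum>E\<in>P. c E *\<^sub>R \<mu> E) - I) \<le> e)" for I
    unfolding Q_def Hy_def by (rule refl)
  have uniq: "I = I0" if QI: "Q I" for I
  proof (rule ccontr)
    assume ne: "I \<noteq> I0"
    define e where "e = norm (I - I0) / 3"
    have e: "e > 0" unfolding e_def using ne by simp
    obtain d1 where d1: "d1 > 0" "\<forall>P c. Hy d1 P c \<longrightarrow> norm ((\<Sum>E\<in>P. c E *\<^sub>R \<mu> E) - I) \<le> e"
      using QI e unfolding Qeq by blast
    obtain d2 where d2: "d2 > 0" "\<forall>P c. Hy d2 P c \<longrightarrow> norm ((\<Sum>E\<in>P. c E *\<^sub>R \<mu> E) - I0) \<le> e"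
      using Q0 e unfolding Qeq by blast
    have md: "min d1 d2 > 0" using d1(1) d2(1) by simp
    obtain P c where Pc: "Hy (min d1 d2) P c"
      using partition_exists[OF meas B md] unfolding Hy_def by blast
    have Hmono: "Hy d' P c" if "Hy d P c" "d \<le> d'" for d d'
      using that unfolding Hy_def by (blast intro: order_trans)
    have "Hy d1 P c" using Hmono[OF Pc] by simp
    hence n1: "norm ((\<Sum>E\<in>P. c E *\<^sub>R \<mu> E) - I) \<le> e" using d1(2) by blast
    have "Hy d2 P c" using Hmono[OF Pc] by simp
    hence n2: "norm ((\<Sum>E\<in>P. c E *\<^sub>R \<mu> E) - I0) \<le> e" using d2(2) by blast
    define S where "S = (\<Sum>E\<in>P. c E *\<^sub>R \<mu> E)"
    have "I - I0 = (S - I0) - (S - I)" by simp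
    hence "norm (I - I0) \<le> norm (S - I0) + norm (S - I)" using norm_triangle_ineq4[of "S - I0" "S - I"] by simp
    hence "norm (I - I0) \<le> 2 * e" using n1 n2 unfolding S_def by linarith
    thus False using e unfolding e_def by simp
  qed
  have "vm_integral borel \<mu> \<phi> = I0"
    unfolding vm_integral_def Q_def[symmetric] using Q0 uniq by (rule the_equality)
  thus ?thesis unfolding \<mu>_def I0_def .
qed

lemma dirac_sums:
  assumes "disjoint_family A"
  shows "(\<lambda>n. if y \<in> A n then a else 0) sums (if y \<in> (\<Union>n. A n) then a else (0::'v::real_normed_vector))"
proof (cases "y \<in> (\<Union>n. A n)")
  case True
  then obtain m where m: "y \<in> A m" by blast
  have "\<And>n. y \<in> A n \<longleftrightarrow> n = m"
    using assms m unfolding disjoint_family_on_def by blast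
  hence "(\<lambda>n. if y \<in> A n then a else 0) = (\<lambda>n. if n = m then a else 0)" by auto
  moreover have "(\<lambda>n. if n = m then a else 0) sums a" using sums_single[of m "\<lambda>_. a"] by simp
  ultimately show ?thesis using True by simp
next
  case False
  hence "(\<lambda>n. if y \<in> A n then a else 0) = (\<lambda>n. 0)" by auto
  thus ?thesis using False by simp
qed

lemma vector_measure_two:
  "vector_measure M (\<lambda>E. (if y1\<in>E then a1 else 0) + (if y2\<in>E then a2 else (0::'v::real_normed_vector)))"
  unfolding vector_measure_def
proof (intro conjI allI impI)
  show "(if y1 \<in> {} then a1 else 0) + (if y2 \<in> {} then a2 else 0) = 0" by simp
  fix A :: "nat \<Rightarrow> 'a set" assume "range A \<subseteq> sets M \<and> disjoint_family A"
  hence d: "disjoint_family A" by blast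
  show "(\<lambda>n. (if y1 \<in> A n then a1 else 0) + (if y2 \<in> A n then a2 else 0)) sums
    ((if y1 \<in> (\<Union>n. A n) then a1 else 0) + (if y2 \<in> (\<Union>n. A n) then a2 else 0))"
    by (rule sums_add[OF dirac_sums[OF d] dirac_sums[OF d]])
qed

lemma sum_p_one_point:
  assumes "seminorm p" "finite F" "disjoint F"
  shows "(\<Sum>E\<in>F. p (if y \<in> E then a else 0)) \<le> p a"
proof -
  have "(\<Sum>E\<in>F. p (if y \<in> E then a else 0)) = 0 \<or>
    (\<exists>E\<in>F. y \<in> E \<and> (\<Sum>E\<in>F. p (if y \<in> E then a else 0)) = p (if y \<in> E then a else 0))"
    by (rule sum_one_point[OF assms(2,3)]) (simp add: seminorm_nonneg(2)[OF assms(1)])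
  thus ?thesis using seminorm_nonneg(1)[OF assms(1), of a] by auto
qed

lemma tv_two:
  fixes y1 y2 :: "'a::metric_space" and a1 a2 :: "'v::real_normed_vector"
  assumes sp: "seminorm p" and ne: "y1 \<noteq> y2"
  shows "total_variation borel p (\<lambda>E. (if y1\<in>E then a1 else 0) + (if y2\<in>E then a2 else 0)) UNIV
           = ennreal (p a1 + p a2)"
  unfolding total_variation_def
proof (rule antisym)
  show "(SUP F\<in>{F. finite F \<and> F \<subseteq> sets borel \<and> (\<forall>E\<in>F. E \<subseteq> UNIV) \<and> disjoint F}.
      ennreal (\<Sum>E\<in>F. p ((if y1 \<in> E then a1 else 0) + (if y2 \<in> E then a2 else 0)))) \<le> ennreal (p a1 + p a2)"
  proof (rule SUP_least)
    fix F :: "'a set set" assume "F \<in> {F. finite F \<and> F \<subseteq> sets borel \<and> (\<forall>E\<in>F. E \<subseteq> UNIV) \<and> disjoint F}"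
    hence f: "finite F" and d: "disjoint F" by auto
    have "(\<Sum>E\<in>F. p ((if y1 \<in> E then a1 else 0) + (if y2 \<in> E then a2 else 0)))
        \<le> (\<Sum>E\<in>F. p (if y1 \<in> E then a1 else 0) + p (if y2 \<in> E then a2 else 0))"
      using sp unfolding seminorm_def by (intro sum_mono) blast
    also have "\<dots> = (\<Sum>E\<in>F. p (if y1 \<in> E then a1 else 0)) + (\<Sum>E\<in>F. p (if y2 \<in> E then a2 else 0))"
      by (rule sum.distrib)
    also have "\<dots> \<le> p a1 + p a2"
      using sum_p_one_point[OF sp f d, of y1 a1] sum_p_one_point[OF sp f d, of y2 a2] by linarith
    finally show "ennreal (\<Sum>E\<in>F. p ((if y1 \<in> E then a1 else 0) + (if y2 \<in> E then a2 else 0)))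
        \<le> ennreal (p a1 + p a2)" by (rule ennreal_leI)
  qed
next
  let ?F = "{{y1}, {y2}}"
  have mem: "?F \<in> {F. finite F \<and> F \<subseteq> sets borel \<and> (\<forall>E\<in>F. E \<subseteq> UNIV) \<and> disjoint F}"
  proof -
    have "{y1} \<in> sets borel" "{y2} \<in> sets borel" by (simp_all add: borel_closed)
    moreover have "disjoint ?F" using ne unfolding pairwise_def disjnt_def by blast
    ultimately show ?thesis by simp
  qed
  have neq: "{y1} \<noteq> {y2}" using ne by simp
  have sumeq: "(\<Sum>E\<in>?F. p ((if y1 \<in> E then a1 else 0) + (if y2 \<in> E then a2 else 0))) = p a1 + p a2"
    using ne neq by simp
  show "ennreal (p a1 + p a2) \<le> (SUP F\<in>{F. finite F \<and> F \<subseteq> sets borel \<and> (\<forall>E\<in>F. E \<subseteq> UNIV) \<and> disjoint F}.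
      ennreal (\<Sum>E\<in>F. p ((if y1 \<in> E then a1 else 0) + (if y2 \<in> E then a2 else 0))))"
    by (rule SUP_upper2[OF mem]) (simp only: sumeq order_refl)
qed

lemma tv_one:
  fixes y :: "'a::metric_space" and a :: "'v::real_normed_vector"
  assumes sp: "seminorm p"
  shows "total_variation borel p (\<lambda>E. if y\<in>E then a else 0) UNIV = ennreal (p a)"
  unfolding total_variation_def
proof (rule antisym)
  show "(SUP F\<in>{F. finite F \<and> F \<subseteq> sets borel \<and> (\<forall>E\<in>F. E \<subseteq> UNIV) \<and> disjoint F}.
      ennreal (\<Sum>E\<in>F. p (if y \<in> E then a else 0))) \<le> ennreal (p a)"
  proof (rule SUP_least)
    fix F :: "'a set set" assume "F \<in> {F. finite F \<and> F \<subseteq> sets borel \<and> (\<forall>E\<in>F. E \<subseteq> UNIV) \<and> disjoint F}"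
    hence f: "finite F" and d: "disjoint F" by auto
    show "ennreal (\<Sum>E\<in>F. p (if y \<in> E then a else 0)) \<le> ennreal (p a)"
      using sum_p_one_point[OF sp f d, of y a] by (rule ennreal_leI)
  qed
next
  have mem: "{UNIV} \<in> {F. finite F \<and> F \<subseteq> sets borel \<and> (\<forall>E\<in>F. E \<subseteq> UNIV) \<and> disjoint F}"
    by (simp add: pairwise_def)
  have sumeq: "(\<Sum>E\<in>{UNIV}. p (if y \<in> E then a else 0)) = p a" by simp
  show "ennreal (p a) \<le> (SUP F\<in>{F. finite F \<and> F \<subseteq> sets borel \<and> (\<forall>E\<in>F. E \<subseteq> UNIV) \<and> disjoint F}.
      ennreal (\<Sum>E\<in>F. p (if y \<in> E then a else 0)))"
    by (rule SUP_upper2[OF mem]) (simp only: sumeq order_refl)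
qed

lemma indep_aux1: fixes v w :: "'v::real_vector" assumes "v = u *\<^sub>R (v + w)" shows "u *\<^sub>R w = (1 - u) *\<^sub>R v"
proof -
  have "v = u *\<^sub>R v + u *\<^sub>R w" using assms by (simp add: scaleR_add_right)
  hence "u *\<^sub>R w = v - u *\<^sub>R v" by (simp add: eq_diff_eq add.commute)
  thus ?thesis by (simp add: scaleR_diff_left)
qed

lemma indep_aux2: fixes v w :: "'v::real_vector" assumes "v \<noteq> w" "w \<in> span {v}" shows "dependent {v, w}"
proof -
  have "{v, w} - {w} = {v}" using assms(1) by auto
  thus ?thesis using assms(2) unfolding dependent_def by auto
qed

lemma indep_not_segment:
  fixes v w :: "'v::real_vector"
  assumes "v \<noteq> w" "independent {v, w}"
  shows "v \<notin> closed_segment 0 (v + w)"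
proof
  assume "v \<in> closed_segment 0 (v + w)"
  then obtain u where u: "v = u *\<^sub>R (v + w)" unfolding in_segment by auto
  show False
  proof (cases "u = 0")
    case True
    hence "v = 0" using u by simp
    hence "dependent {v, w}" by (simp add: dependent_zero)
    thus False using assms(2) by simp
  next
    case False
    have eq: "u *\<^sub>R w = (1 - u) *\<^sub>R v" using u by (rule indep_aux1)
    have "w = inverse u *\<^sub>R (u *\<^sub>R w)" using False by simp
    also have "\<dots> = inverse u *\<^sub>R ((1 - u) *\<^sub>R v)" using eq by simp
    finally have "w \<in> span {v}" using span_scale[OF span_base[of v "{v}"], of "inverse u * (1 - u)"] by simp
    hence "dependent {v, w}" using assms(1) by (intro indep_aux2)
    thus False using assms(2) by simp
  qed
qed

theorem proposition1p2:
  fixes p :: "'v::euclidean_space \<Rightarrow> real"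
  assumes "locally_compact_space (euclidean :: 'a::metric_space topology)"
    and "separable_space (euclidean :: 'a topology)"
    and "\<exists>x::'a. \<not> open {x}"
    and "seminorm p"
    and "\<not> strictly_convex_seminorm p"
  shows "\<exists>(\<mu>s :: nat \<Rightarrow> 'a set \<Rightarrow> 'v) \<mu>.
           (\<forall>n. vector_measure borel (\<mu>s n)) \<and> vector_measure borel \<mu> \<and>
           wide_conv borel \<mu>s \<mu> \<and>
           (\<lambda>n. total_variation borel p (\<mu>s n) UNIV) \<longlonglongrightarrow> total_variation borel p \<mu> UNIV \<and>
           (\<forall>n. vm_range borel (\<mu>s n) = vm_range borel (\<mu>s 0)) \<and>
           vm_range borel (\<mu>s 0) \<noteq> vm_range borel \<mu>"
proof -
  have sp: "seminorm p" by (fact assms(4))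
  obtain v w where vw: "v \<noteq> w" "independent {v, w}" "\<not> p (v + w) < p v + p w"
    using assms(5) unfolding strictly_convex_seminorm_def by blast
  have "p (v + w) \<le> p v + p w" using sp unfolding seminorm_def by blast
  hence peq: "p (v + w) = p v + p w" using vw(3) by linarith
  obtain x0 :: 'a where x0: "\<not> open {x0}" using assms(3) by blast
  have "x0 islimpt UNIV"
  proof (rule islimptI)
    fix T assume T1: "x0 \<in> T" and T2: "open T"
    have T: "x0 \<in> T \<and> open T" using T1 T2 by blast
    show "\<exists>y\<in>UNIV. y \<in> T \<and> y \<noteq> x0"
    proof (rule ccontr)
      assume "\<not> ?thesis"
      hence "T = {x0}" using T by blast
      thus False using T x0 by simp
    qed
  qed
  then obtain xs where xs: "\<And>n. xs n \<in> UNIV - {x0}" "xs \<longlonglongrightarrow> x0"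
    unfolding islimpt_sequential by blast
  have xne: "xs n \<noteq> x0" for n using xs(1)[of n] by blast
  define \<mu>s where "\<mu>s n E = (if xs n \<in> E then v else 0) + (if x0 \<in> E then w else 0)" for n and E :: "'a set"
  define \<mu> where "\<mu> E = (if x0 \<in> E then v + w else 0)" for E :: "'a set"
  have \<mu>_eq: "\<mu> = (\<lambda>E. (if x0 \<in> E then v else 0) + (if x0 \<in> E then w else 0))"
    unfolding \<mu>_def by (rule ext) simp
  have vm1: "\<forall>n. vector_measure borel (\<mu>s n)"
    unfolding \<mu>s_def[abs_def] by (intro allI vector_measure_two)
  have vm2: "vector_measure borel \<mu>" unfolding \<mu>_eq by (rule vector_measure_two)
  have wc: "wide_conv borel \<mu>s \<mu>" unfolding wide_conv_def
  proof
    fix \<phi> :: "'a \<Rightarrow> real" assume \<phi>: "\<phi> \<in> Cc"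
    have i1: "vm_integral borel (\<mu>s n) \<phi> = \<phi> (xs n) *\<^sub>R v + \<phi> x0 *\<^sub>R w" for n
      unfolding \<mu>s_def[abs_def] by (rule vm_integral_two[OF \<phi>])
    have i2: "vm_integral borel \<mu> \<phi> = \<phi> x0 *\<^sub>R v + \<phi> x0 *\<^sub>R w"
      unfolding \<mu>_eq by (rule vm_integral_two[OF \<phi>])
    have "continuous_on UNIV \<phi>" using \<phi> unfolding Cc_def by blast
    hence "isCont \<phi> x0" using continuous_on_eq_continuous_at[OF open_UNIV] by blast
    hence "(\<lambda>n. \<phi> (xs n)) \<longlonglongrightarrow> \<phi> x0" using xs(2) by (rule isCont_tendsto_compose)
    hence "(\<lambda>n. \<phi> (xs n) *\<^sub>R v + \<phi> x0 *\<^sub>R w) \<longlonglongrightarrow> \<phi> x0 *\<^sub>R v + \<phi> x0 *\<^sub>R w"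
      by (intro tendsto_intros)
    thus "(\<lambda>n. vm_integral borel (\<mu>s n) \<phi>) \<longlonglongrightarrow> vm_integral borel \<mu> \<phi>"
      unfolding i1 i2 .
  qed
  have tv1: "total_variation borel p (\<mu>s n) UNIV = ennreal (p v + p w)" for n
    unfolding \<mu>s_def[abs_def] using tv_two[OF sp xne[of n], of v w] by simp
  have tv2: "total_variation borel p \<mu> UNIV = ennreal (p v + p w)"
    unfolding \<mu>_def[abs_def] using tv_one[OF sp, of x0 "v + w"] peq by simp
  have tvc: "(\<lambda>n. total_variation borel p (\<mu>s n) UNIV) \<longlonglongrightarrow> total_variation borel p \<mu> UNIV"
    unfolding tv1 tv2 by simp
  have img: "\<mu>s n ` sets borel = {0, v, w, v + w}" for n
  proof
    show "\<mu>s n ` sets borel \<subseteq> {0, v, w, v + w}" unfolding \<mu>s_def by auto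
    have s1: "{xs n} \<in> sets borel" "{x0} \<in> sets borel" "{xs n, x0} \<in> sets borel"
      by (simp_all add: borel_closed finite_imp_closed)
    have "\<mu>s n {} = 0" "\<mu>s n {xs n} = v" "\<mu>s n {x0} = w" "\<mu>s n {xs n, x0} = v + w"
      unfolding \<mu>s_def using xne[of n] by auto
    note eqs = this
    have im: "\<mu>s n E \<in> \<mu>s n ` sets borel" if "E \<in> sets borel" for E using that by (rule imageI)
    have "0 \<in> \<mu>s n ` sets borel" using im[of "{}"] eqs(1) by simp
    moreover have "v \<in> \<mu>s n ` sets borel" using im[OF s1(1)] eqs(2) by simp
    moreover have "w \<in> \<mu>s n ` sets borel" using im[OF s1(2)] eqs(3) by simp
    moreover have "v + w \<in> \<mu>s n ` sets borel" using im[OF s1(3)] eqs(4) by simp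
    ultimately show "{0, v, w, v + w} \<subseteq> \<mu>s n ` sets borel" by blast
  qed
  have img2: "\<mu> ` sets borel = {0, v + w}"
  proof
    show "\<mu> ` sets borel \<subseteq> {0, v + w}" unfolding \<mu>_def by auto
    have s1: "{x0} \<in> sets borel" by (simp add: borel_closed)
    have "\<mu> {} = 0" "\<mu> {x0} = v + w" unfolding \<mu>_def by auto
    note eqs = this
    have im: "\<mu> E \<in> \<mu> ` sets borel" if "E \<in> sets borel" for E using that by (rule imageI)
    have "0 \<in> \<mu> ` sets borel" using im[of "{}"] eqs(1) by simp
    moreover have "v + w \<in> \<mu> ` sets borel" using im[OF s1] eqs(2) by simp
    ultimately show "{0, v + w} \<subseteq> \<mu> ` sets borel" by blast
  qed
  have rc: "\<forall>n. vm_range borel (\<mu>s n) = vm_range borel (\<mu>s 0)"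
    unfolding vm_range_def img by simp
  have "v \<in> vm_range borel (\<mu>s 0)"
  proof -
    have "v \<in> convex hull {0, v, w, v + w}" by (rule hull_inc) simp
    thus ?thesis unfolding vm_range_def img using closure_subset by blast
  qed
  moreover have "vm_range borel \<mu> = closed_segment 0 (v + w)"
    unfolding vm_range_def img2 segment_convex_hull[symmetric] by (simp add: closed_segment)
  ultimately have rne: "vm_range borel (\<mu>s 0) \<noteq> vm_range borel \<mu>"
    using indep_not_segment[OF vw(1,2)] by blast
  show ?thesis
    apply (rule exI[of _ \<mu>s])
    apply (rule exI[of _ \<mu>])
    using vm1 vm2 wc tvc rc rne by (intro conjI)
qed

end
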